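(* Let $\tau$ be a primitive substitution. Then: (i) every generator of length one is basic; (ii) a generator $(v,ab,w)$ with $v,w\in\mathcal{A}^+$, $a,b\in\mathcal{A}$ is basic if and only if $\tau(a)=va$ and $\tau(b)=bw$; (iii) no generator of length three or more is basic.
   Context: Let $\mathcal{A}$ be a finite nonempty alphabet, $\mathcal{A}^*$ the finite words over $\mathcal{A}$ (including the empty word), $\mathcal{A}^+$ the nonempty words, $|u|$ the length of $u$. A word $u$ is a factor of $v$ if $v=w_1uw_2$ for some words $w_1,w_2$. A substitution is a map $\tau:\mathcal{A}\to\mathcal{A}^+$ extended to a concatenation-respecting map on words. The language $\mathcal{L}(\tau)$ is the set of words that are factors of $\tau^n(a)$ for some letter $a$ and some $n\ge1$. $\tau$ is primitive if there is $n\ge1$ such that every letter $b$ is a factor of $\tau^n(a)$ for every letter $a$, and there is a letter $a$ such that for every $N$ there is $n$ with $|\tau^n(a)|>N$. A generator for $\tau$ is a triple $(v,u,w)$ with $v,u,w\in\mathcal{A}^+$, $u\in\mathcal{L}(\tau)$ and $\tau(u)=vuw$; $v$, $u$, $w$ are its left wing, center and right wing, and its length is $|u|$. If $(v,u,cw)$ is a generator with $c\in\mathcal{A}$, $w\in\mathcal{A}^*$, its right extension is the generator $(v,uc,w\tau(c))$; if $(vc,u,w)$ is a generator with $c\in\mathcal{A}$, $v\in\mathcal{A}^*$, its left extension is the generator $(\tau(c)v,cu,w)$. Two generators $g_1,g_2$ are G related ($g_1\sim_G g_2$) if there is a generator $g_3$ obtainable from $g_1$ and also from $g_2$ by finite (possibly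 empty) sequences of left and right extensions. A generator is basic if it is not G related to any generator of smaller length. *)

theory Defs
  imports Main
begin

definition substitution :: "('a \<Rightarrow> 'a list) \<Rightarrow> bool" where
  "substitution \<tau> \<longleftrightarrow> (\<forall>a. \<tau> a \<noteq> [])"

definition subst_word :: "('a \<Rightarrow> 'a list) \<Rightarrow> 'a list \<Rightarrow> 'a list" where
  "subst_word \<tau> u = concat (map \<tau> u)"

definition factor :: "'a list \<Rightarrow> 'a list \<Rightarrow> bool" where
  "factor u v \<longleftrightarrow> (\<exists>w1 w2. v = w1 @ u @ w2)"

definition lang :: "('a \<Rightarrow> 'a list) \<Rightarrow> 'a list set" where
  "lang \<tau> = {u. \<exists>a n. n \<ge> 1 \<and> factor u ((subst_word \<tau> ^^ n) [a])}"

definition primitive :: "('a \<Rightarrow> 'a list) \<Rightarrow> bool" where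
  "primitive \<tau> \<longleftrightarrow>
     (\<exists>n\<ge>1. \<forall>a b. factor [b] ((subst_word \<tau> ^^ n) [a])) \<and>
     (\<exists>a. \<forall>N. \<exists>n. length ((subst_word \<tau> ^^ n) [a]) > N)"

text \<open>A generator is a triple (v,u,w) = (left wing, center, right wing).\<close>
definition generator :: "('a \<Rightarrow> 'a list) \<Rightarrow> 'a list \<times> 'a list \<times> 'a list \<Rightarrow> bool" where
  "generator \<tau> g \<longleftrightarrow> (case g of (v, u, w) \<Rightarrow>
     v \<noteq> [] \<and> u \<noteq> [] \<and> w \<noteq> [] \<and> u \<in> lang \<tau> \<and> subst_word \<tau> u = v @ u @ w)"

definition ext_step :: "('a \<Rightarrow> 'a list) \<Rightarrow> 'a list \<times> 'a list \<times> 'a list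
    \<Rightarrow> 'a list \<times> 'a list \<times> 'a list \<Rightarrow> bool" where
  "ext_step \<tau> g g' \<longleftrightarrow> generator \<tau> g \<and>
     ((\<exists>v u c w. g = (v, u, c # w) \<and> g' = (v, u @ [c], w @ \<tau> c)) \<or>
      (\<exists>v u c w. g = (v @ [c], u, w) \<and> g' = (\<tau> c @ v, c # u, w)))"

definition G_related :: "('a \<Rightarrow> 'a list) \<Rightarrow> 'a list \<times> 'a list \<times> 'a list
    \<Rightarrow> 'a list \<times> 'a list \<times> 'a list \<Rightarrow> bool" where
  "G_related \<tau> g1 g2 \<longleftrightarrow>
     (\<exists>g3. (ext_step \<tau>)\<^sup>*\<^sup>* g1 g3 \<and> (ext_step \<tau>)\<^sup>*\<^sup>* g2 g3)"

definition basic :: "('a \<Rightarrow> 'a list) \<Rightarrow> 'a list \<times> 'a list \<times> 'a list \<Rightarrow> bool" where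
  "basic \<tau> g \<longleftrightarrow> generator \<tau> g \<and>
     \<not> (\<exists>g'. generator \<tau> g' \<and> G_related \<tau> g g' \<and>
             length (fst (snd g')) < length (fst (snd g)))"

end

theory Submission
  imports Defs
begin

fun sc :: "('a \<Rightarrow> 'a list) \<Rightarrow> int \<Rightarrow> 'a list \<Rightarrow> nat" where
  "sc \<tau> k [] = 0"
| "sc \<tau> k (c#U) = (if 0 \<le> k \<and> k < int (length (\<tau> c)) then 1 else 0)
     + sc \<tau> (k + 1 - int (length (\<tau> c))) U"

lemma sw_simps[simp]:
  "subst_word \<tau> [] = []" "subst_word \<tau> (c#u) = \<tau> c @ subst_word \<tau> u"
  "subst_word \<tau> (u @ v) = subst_word \<tau> u @ subst_word \<tau> v"
  by (auto simp: subst_word_def)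

lemma sw_len: "substitution \<tau> \<Longrightarrow> length (subst_word \<tau> u) \<ge> length u"
proof (induction u)
  case (Cons c u)
  then have "length (\<tau> c) \<ge> 1" by (auto simp: substitution_def Suc_le_eq)
  then show ?case using Cons by simp
qed simp

lemma sc_snoc: "sc \<tau> k (U @ [c]) = sc \<tau> k U +
   (if 0 \<le> k + int (length U) - int (length (subst_word \<tau> U)) \<and>
       k + int (length U) - int (length (subst_word \<tau> U)) < int (length (\<tau> c)) then 1 else 0)"
  by (induction U arbitrary: k) (auto simp: algebra_simps)

definition scg where "scg \<tau> g = sc \<tau> (int (length (fst g))) (fst (snd g))"

lemma ext_inv: "ext_step \<tau> g g' \<Longrightarrow> scg \<tau> g' = scg \<tau> g"
proof -
  assume e: "ext_step \<tau> g g'"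
  then have gen: "generator \<tau> g" by (simp add: ext_step_def)
  from e consider (R) v u c w where "g = (v, u, c # w)" "g' = (v, u @ [c], w @ \<tau> c)"
    | (L) v u c w where "g = (v @ [c], u, w)" "g' = (\<tau> c @ v, c # u, w)"
    by (auto simp: ext_step_def)
  then show ?thesis
  proof cases
    case R
    then have "subst_word \<tau> u = v @ u @ c # w" using gen by (simp add: generator_def)
    then have "length (subst_word \<tau> u) = length v + length u + Suc (length w)"
      by simp
    then show ?thesis using R by (simp add: scg_def sc_snoc)
  next
    case L
    then show ?thesis by (simp add: scg_def algebra_simps)
  qed
qed

lemma rt_inv: "(ext_step \<tau>)\<^sup>*\<^sup>* g g' \<Longrightarrow> scg \<tau> g' = scg \<tau> g"
  by (induction rule: rtranclp_induct) (auto dest: ext_inv)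

lemma G_inv: "G_related \<tau> g g' \<Longrightarrow> scg \<tau> g' = scg \<tau> g"
  unfolding G_related_def by (metis rt_inv)

lemma factor_trans: "factor u v \<Longrightarrow> factor v w \<Longrightarrow> factor u w"
  unfolding factor_def by (metis append.assoc)

lemma lang_factor: "u \<in> lang \<tau> \<Longrightarrow> factor u' u \<Longrightarrow> u' \<in> lang \<tau>"
  unfolding lang_def by (auto intro: factor_trans)

lemma G_of_ext: "ext_step \<tau> g' g \<Longrightarrow> G_related \<tau> g g'"
  unfolding G_related_def by blast

lemma len1_basic:
  assumes "generator \<tau> (v, u, w)" "length u = 1"
  shows "basic \<tau> (v, u, w)"
  using assms by (auto simp: basic_def generator_def)

lemma len1_scg:
  assumes "generator \<tau> g" "length (fst (snd g)) = 1"
  shows "scg \<tau> g = 1"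
proof -
  obtain v c w where g: "g = (v, [c], w)" using assms
    by (cases g) (auto simp: length_Suc_conv)
  then have "\<tau> c = v @ [c] @ w" using assms by (simp add: generator_def)
  then show ?thesis using g by (simp add: scg_def)
qed

lemma fixed_letter_false:
  assumes "primitive \<tau>" "\<tau> x = [x]"
  shows False
proof -
  have it: "(subst_word \<tau> ^^ n) [x] = [x]" for n
    by (induction n) (auto simp: assms(2))
  from assms(1) obtain n where "\<forall>a b. factor [b] ((subst_word \<tau> ^^ n) [a])"
    unfolding primitive_def by blast
  then have all: "\<forall>b. b = x"
  proof (intro allI)
    fix b assume "\<forall>a b. factor [b] ((subst_word \<tau> ^^ n) [a])"
    then obtain w1 w2 where "[x] = w1 @ [b] @ w2" using it unfolding factor_def by metis
    then show "b = x" by (cases w1) auto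
  qed
  from assms(1) obtain a where "\<forall>N. \<exists>n. length ((subst_word \<tau> ^^ n) [a]) > N"
    unfolding primitive_def by blast
  then obtain m where "length ((subst_word \<tau> ^^ m) [a]) > 1" by blast
  moreover have "a = x" using all by blast
  ultimately show False using it by simp
qed


lemma app_split: "xs @ ys = zs @ ts \<Longrightarrow> length xs \<le> length zs \<Longrightarrow> \<exists>r. zs = xs @ r \<and> ys = r @ ts"
  by (auto simp: append_eq_append_conv_if) (metis append_take_drop_id)

lemma app_split2: "xs @ ys = zs @ ts \<Longrightarrow> length ys \<le> length ts \<Longrightarrow> \<exists>r. ts = r @ ys \<and> xs = zs @ r"
proof -
  assume h: "xs @ ys = zs @ ts" "length ys \<le> length ts"
  have "length xs + length ys = length zs + length ts" using arg_cong[OF h(1), of length] by simp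
  then have "length zs \<le> length xs" using h(2) by linarith
  then obtain r where "xs = zs @ r" "ts = r @ ys" using app_split[OF h(1)[symmetric]] by blast
  then show ?thesis by blast
qed

lemma fixed_from_id:
  assumes "substitution \<tau>" "subst_word \<tau> m = m" "m \<noteq> []"
  shows "\<exists>x. \<tau> x = [x]"
proof -
  obtain x m' where m: "m = x # m'" using assms(3) by (cases m) auto
  have "length (\<tau> x) \<ge> 1" using assms(1) by (auto simp: substitution_def Suc_le_eq)
  moreover have "length (subst_word \<tau> m') \<ge> length m'" using sw_len[OF assms(1)] .
  moreover have e: "\<tau> x @ subst_word \<tau> m' = [x] @ m'" using assms(2) m by simp
  moreover have "length (\<tau> x) + length (subst_word \<tau> m') = 1 + length m'"
    using arg_cong[OF e, of length] by simp
  ultimately have "length (\<tau> x) = length [x]" by simp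
  then have "\<tau> x = [x]" using e append_eq_append_conv by blast
  then show ?thesis by blast
qed

lemma part2:
  assumes sub: "substitution \<tau>" and gen: "generator \<tau> (v, [a, b], w)"
  shows "basic \<tau> (v, [a, b], w) \<longleftrightarrow> \<tau> a = v @ [a] \<and> \<tau> b = b # w"
proof
  assume h: "\<tau> a = v @ [a] \<and> \<tau> b = b # w"
  have s2: "scg \<tau> (v, [a, b], w) = 2" using h by (simp add: scg_def)
  show "basic \<tau> (v, [a, b], w)"
    unfolding basic_def
  proof (intro conjI notI gen)
    assume "\<exists>g'. generator \<tau> g' \<and> G_related \<tau> (v, [a, b], w) g' \<and>
             length (fst (snd g')) < length (fst (snd (v, [a, b], w)))"
    then obtain g' where g': "generator \<tau> g'" "G_related \<tau> (v, [a, b], w) g'"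
       "length (fst (snd g')) < 2" by auto
    have "fst (snd g') \<noteq> []" using g'(1) by (cases g') (auto simp: generator_def)
    then have "length (fst (snd g')) = 1" using g'(3) by (cases "fst (snd g')") auto
    then have "scg \<tau> g' = 1" using len1_scg g'(1) by blast
    moreover have "scg \<tau> g' = 2" using G_inv[OF g'(2)] s2 by simp
    ultimately show False by simp
  qed
next
  assume bas: "basic \<tau> (v, [a, b], w)"
  have eq: "subst_word \<tau> [a, b] = v @ [a, b] @ w" and lab: "[a, b] \<in> lang \<tau>" and vw: "v \<noteq> []" "w \<noteq> []"
    using gen by (auto simp: generator_def)
  have eq': "\<tau> a @ \<tau> b = v @ [a, b] @ w" using eq by simp
  have "factor [b] [a, b]" unfolding factor_def by (intro exI[of _ "[a]"] exI[of _ "[]"]) simp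
  moreover have "factor [a] [a, b]" unfolding factor_def by (intro exI[of _ "[]"] exI[of _ "[b]"]) simp
  ultimately have lb: "[b] \<in> lang \<tau>" "[a] \<in> lang \<tau>" using lang_factor[OF lab] by auto
  consider "length (\<tau> a) \<le> length v" | "length (\<tau> a) = length v + 1" | "length (\<tau> a) \<ge> length v + 2"
    by linarith
  then show "\<tau> a = v @ [a] \<and> \<tau> b = b # w"
  proof cases
    case 1
    then obtain r where r: "v = \<tau> a @ r" "\<tau> b = r @ [a, b] @ w" using app_split[OF eq'] by blast
    let ?g = "(r @ [a], [b], w)"
    have g: "generator \<tau> ?g" using r lb vw by (simp add: generator_def)
    have "ext_step \<tau> ?g (v, [a, b], w)" using g r unfolding ext_step_def by blast
    then have "G_related \<tau> (v, [a, b], w) ?g" by (rule G_of_ext)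
    then have False using bas g unfolding basic_def by force
    then show ?thesis ..
  next
    case 2
    have "\<tau> a @ \<tau> b = (v @ [a]) @ (b # w)" using eq' by simp
    then show ?thesis using 2 by (subst (asm) append_eq_append_conv) auto
  next
    case 3
    have "\<tau> a @ \<tau> b = (v @ [a, b]) @ w" using eq' by simp
    then obtain r where r: "\<tau> a = v @ [a, b] @ r" "w = r @ \<tau> b"
      using app_split[of "v @ [a, b]" w "\<tau> a" "\<tau> b"] 3 by auto
    let ?g = "(v, [a], b # r)"
    have g: "generator \<tau> ?g" using r lb vw by (simp add: generator_def)
    have "ext_step \<tau> ?g (v, [a, b], w)" using g r unfolding ext_step_def
      by auto
    then have "G_related \<tau> (v, [a, b], w) ?g" by (rule G_of_ext)
    then have False using bas g unfolding basic_def by force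
    then show ?thesis ..
  qed
qed


lemma part3:
  assumes sub: "substitution \<tau>" and prim: "primitive \<tau>"
    and gen: "generator \<tau> (v, u, w)" and len: "length u \<ge> 3"
  shows "\<not> basic \<tau> (v, u, w)"
proof
  assume bas: "basic \<tau> (v, u, w)"
  obtain c u1 where u1: "u = c # u1" using len by (cases u) auto
  obtain m d where md: "u1 = m @ [d]" using len u1 by (cases u1 rule: rev_cases) auto
  have mne: "m \<noteq> []" using len u1 md by auto
  have eq: "subst_word \<tau> u = v @ u @ w" and lab: "u \<in> lang \<tau>" and vw: "v \<noteq> []" "w \<noteq> []"
    using gen by (auto simp: generator_def)
  have eq': "\<tau> c @ (subst_word \<tau> m @ \<tau> d) = v @ c # m @ [d] @ w" using eq u1 md by simp
  have f1: "m @ [d] \<in> lang \<tau>" using lang_factor[OF lab] u1 md unfolding factor_def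
    by (metis append_Cons append_Nil append_Nil2)
  have f2: "c # m \<in> lang \<tau>" using lang_factor[OF lab] u1 md unfolding factor_def
    by (metis append.assoc append_Cons append_Nil)
  consider "length (\<tau> c) \<le> length v" | "length (\<tau> d) \<le> length w"
    | "length (\<tau> c) > length v" "length (\<tau> d) > length w" by linarith
  then show False
  proof cases
    case 1
    then obtain r where r: "v = \<tau> c @ r" "subst_word \<tau> m @ \<tau> d = r @ c # m @ [d] @ w"
      using app_split[OF eq'] by blast
    let ?g = "(r @ [c], m @ [d], w)"
    have g: "generator \<tau> ?g" using r f1 vw by (simp add: generator_def)
    have "ext_step \<tau> ?g (v, u, w)" using g r u1 md unfolding ext_step_def by blast
    then have "G_related \<tau> (v, u, w) ?g" by (rule G_of_ext)
    then show False using bas g u1 md unfolding basic_def by force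
  next
    case 2
    have "(\<tau> c @ subst_word \<tau> m) @ \<tau> d = (v @ c # m @ [d]) @ w" using eq' by simp
    then obtain r where r: "w = r @ \<tau> d" "\<tau> c @ subst_word \<tau> m = v @ c # m @ [d] @ r"
      using app_split2[of "\<tau> c @ subst_word \<tau> m" "\<tau> d" "v @ c # m @ [d]" w] 2 by auto
    let ?g = "(v, c # m, d # r)"
    have g: "generator \<tau> ?g" using r f2 vw by (simp add: generator_def)
    have "ext_step \<tau> ?g (v, u, w)" using g r u1 md unfolding ext_step_def by auto
    then have "G_related \<tau> (v, u, w) ?g" by (rule G_of_ext)
    then show False using bas g u1 md unfolding basic_def by force
  next
    case 3
    have L: "length (\<tau> c) + length (subst_word \<tau> m) + length (\<tau> d) = length v + length m + 2 + length w"
      using arg_cong[OF eq', of length] by simp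
    have "length (subst_word \<tau> m) \<ge> length m" using sw_len[OF sub] .
    then have lc: "length (\<tau> c) = length (v @ [c])" and lm: "length (subst_word \<tau> m) = length m"
      using L 3 by auto
    have "\<tau> c @ (subst_word \<tau> m @ \<tau> d) = (v @ [c]) @ (m @ [d] @ w)" using eq' by simp
    then have "subst_word \<tau> m @ \<tau> d = m @ ([d] @ w)" using lc append_eq_append_conv by blast
    then have "subst_word \<tau> m = m" using lm append_eq_append_conv by blast
    then obtain x where "\<tau> x = [x]" using fixed_from_id[OF sub _ mne] by blast
    then show False using fixed_letter_false[OF prim] by blast
  qed
qed

theorem mainTheorem3:
  fixes \<tau> :: "'a::finite \<Rightarrow> 'a list"
  assumes "substitution \<tau>" and "primitive \<tau>"
  shows "(\<forall>v u w. generator \<tau> (v, u, w) \<and> length u = 1 \<longrightarrow> basic \<tau> (v, u, w))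
       \<and> (\<forall>v a b w. v \<noteq> [] \<and> w \<noteq> [] \<and> generator \<tau> (v, [a, b], w) \<longrightarrow>
            (basic \<tau> (v, [a, b], w) \<longleftrightarrow> \<tau> a = v @ [a] \<and> \<tau> b = b # w))
       \<and> (\<forall>v u w. generator \<tau> (v, u, w) \<and> length u \<ge> 3 \<longrightarrow> \<not> basic \<tau> (v, u, w))"
  using len1_basic part2[OF assms(1)] part3[OF assms] by blast

end
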